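(* Let $k',d',n'$ be positive integers with $k'<d'<n'/2$. For each positive integer $m$ set $k=k'm$, $d=d'm$, $n=n'm$, let $f_m=\mathrm{Sym}_{d,n}(x_1,\ldots,x_n)=\sum_{I\in\{0,1\}^n,\,|I|=d}x^I$, let $M_m$ be the matrix with rows indexed by $I\in\{0,1\}^n$ with $|I|=k$, columns indexed by $J\in\{0,1\}^n$ with $|J|=d-k$, and entries $1$ if $I,J$ have disjoint supports and $0$ otherwise, and let $B_m=M_m^TM_m$. Let $u_m=\dim\partial^{=k} f_m$ and $v_m=\mathrm{Tr}(B_m)^2/\mathrm{Tr}(B_m^2)$. Then $v_m/u_m\to 0$ as $m\to\infty$.
   Context: $x^I$ for $I\in\{0,1\}^n$ denotes the multilinear monomial $x_1^{I_1}\cdots x_n^{I_n}$, and $|I|=\sum_i I_i$. $\partial^{=k} f$ denotes the real linear span of all partial derivatives of $f$ of total order $k$. *)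

theory Defs
  imports "HOL-Analysis.Analysis" "HOL-Library.Poly_Mapping"
begin

text \<open>Real multivariate polynomials in variables x_0, x_1, ... :
  coefficient maps from exponent vectors (finitely supported nat-to-nat maps) to real.\<close>
type_synonym rpoly = "(nat \<Rightarrow>\<^sub>0 nat) \<Rightarrow>\<^sub>0 real"

definition pscale :: "real \<Rightarrow> rpoly \<Rightarrow> rpoly" where
  "pscale c p = Poly_Mapping.map (\<lambda>x. c * x) p"

definition pdim_span :: "rpoly set \<Rightarrow> nat" where
  "pdim_span S = vector_space.dim pscale (module.span pscale S)"

definition pderiv_var :: "nat \<Rightarrow> rpoly \<Rightarrow> rpoly" where
  "pderiv_var i p = Abs_poly_mapping
     (\<lambda>a. of_nat (Poly_Mapping.lookup a i + 1) * Poly_Mapping.lookup p (a + Poly_Mapping.single i (1::nat)))"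

definition mono_set :: "nat set \<Rightarrow> rpoly" where
  "mono_set I = Poly_Mapping.single (\<Sum>i\<in>I. Poly_Mapping.single i 1) 1"

definition Sym :: "nat \<Rightarrow> nat \<Rightarrow> rpoly" where
  "Sym d n = (\<Sum>I\<in>{I. I \<subseteq> {..<n} \<and> card I = d}. mono_set I)"

definition dim_partials :: "nat \<Rightarrow> nat \<Rightarrow> rpoly \<Rightarrow> nat" where
  "dim_partials n k f =
     pdim_span {foldr pderiv_var is f | is. length is = k \<and> set is \<subseteq> {..<n}}"

definition Mdisj :: "nat set \<Rightarrow> nat set \<Rightarrow> real" where
  "Mdisj I J = (if I \<inter> J = {} then 1 else 0)"

definition subsets_of_size :: "nat \<Rightarrow> nat \<Rightarrow> nat set set" where
  "subsets_of_size n s = {I. I \<subseteq> {..<n} \<and> card I = s}"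

definition Bmat :: "nat \<Rightarrow> nat \<Rightarrow> nat \<Rightarrow> nat set \<Rightarrow> nat set \<Rightarrow> real" where
  "Bmat n k d J J' = (\<Sum>I\<in>subsets_of_size n k. Mdisj I J * Mdisj I J')"

definition trB :: "nat \<Rightarrow> nat \<Rightarrow> nat \<Rightarrow> real" where
  "trB n k d = (\<Sum>J\<in>subsets_of_size n (d - k). Bmat n k d J J)"

definition trB2 :: "nat \<Rightarrow> nat \<Rightarrow> nat \<Rightarrow> real" where
  "trB2 n k d = (\<Sum>J\<in>subsets_of_size n (d - k). \<Sum>J'\<in>subsets_of_size n (d - k).
                    Bmat n k d J J' * Bmat n k d J' J)"

end

theory Submission
  imports Defs
begin


lemma lookup_pscale[simp]: "Poly_Mapping.lookup (pscale c p) x = c * Poly_Mapping.lookup p x"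
  unfolding pscale_def by transfer (simp add: when_def)

interpretation pv: vector_space pscale
  by unfold_locales (auto intro!: poly_mapping_eqI simp: algebra_simps lookup_add)

definition ind :: "nat set \<Rightarrow> (nat \<Rightarrow>\<^sub>0 nat)" where
  "ind I = (\<Sum>i\<in>I. Poly_Mapping.single i 1)"

lemma lookup_ind: "finite I \<Longrightarrow> Poly_Mapping.lookup (ind I) j = (if j \<in> I then 1 else 0)"
  unfolding ind_def by (simp add: lookup_sum lookup_single when_def)

lemma ind_inj: "finite I \<Longrightarrow> finite J \<Longrightarrow> ind I = ind J \<Longrightarrow> I = J"
proof -
  assume f: "finite I" "finite J" and e: "ind I = ind J"
  have "\<forall>j. (if j \<in> I then 1 else 0::nat) = (if j \<in> J then 1 else 0)"
    using e lookup_ind[OF f(1)] lookup_ind[OF f(2)] by metis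
  then show "I = J" by (metis one_neq_zero subsetI subset_antisym)
qed

lemma ind_union: "finite I \<Longrightarrow> finite J \<Longrightarrow> I \<inter> J = {} \<Longrightarrow> ind (I \<union> J) = ind I + ind J"
  unfolding ind_def by (simp add: sum.union_disjoint)

lemma lookup_mono_set: "Poly_Mapping.lookup (mono_set I) e = (if e = ind I then 1 else 0)"
  unfolding mono_set_def ind_def by (simp add: lookup_single when_def eq_commute)

lemma lookup_Sym: "Poly_Mapping.lookup (Sym d n) e =
   (if \<exists>I. I \<subseteq> {..<n} \<and> card I = d \<and> e = ind I then 1 else 0)"
proof (cases "\<exists>I. I \<subseteq> {..<n} \<and> card I = d \<and> e = ind I")
  case True
  then obtain I0 where I0: "I0 \<subseteq> {..<n}" "card I0 = d" "e = ind I0" by blast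
  have fin: "finite {I. I \<subseteq> {..<n} \<and> card I = d}" by (rule finite_subset[of _ "Pow {..<n}"]) auto
  have "Poly_Mapping.lookup (Sym d n) e = (\<Sum>I\<in>{I. I \<subseteq> {..<n} \<and> card I = d}. if I = I0 then 1 else 0)"
    unfolding Sym_def lookup_sum lookup_mono_set
  proof (rule sum.cong[OF refl])
    fix I assume "I \<in> {I. I \<subseteq> {..<n} \<and> card I = d}"
    then have "finite I" using finite_subset by blast
    moreover have "finite I0" using I0 finite_subset by blast
    ultimately show "(if e = ind I then 1 else 0) = (if I = I0 then 1 else (0::real))"
      using I0 ind_inj by auto
  qed
  also have "\<dots> = 1" using fin I0 by simp
  finally show ?thesis using True by simp
next
  case False
  then show ?thesis unfolding Sym_def lookup_sum lookup_mono_set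
    by (intro trans[OF sum.neutral]) auto
qed

lemma lookup_pderiv: "Poly_Mapping.lookup (pderiv_var i p) a =
   of_nat (Poly_Mapping.lookup a i + 1) * Poly_Mapping.lookup p (a + Poly_Mapping.single i 1)"
proof -
  have "finite {a. a + Poly_Mapping.single i 1 \<in> Poly_Mapping.keys p}"
    by (rule finite_vimageI[where h = "\<lambda>a. a + Poly_Mapping.single i 1", unfolded vimage_def])
       (auto simp: inj_on_def)
  then have "finite {a. of_nat (Poly_Mapping.lookup a i + 1) * Poly_Mapping.lookup p (a + Poly_Mapping.single i 1) \<noteq> (0::real)}"
    by (rule finite_subset[rotated]) (auto simp: in_keys_iff)
  then show ?thesis unfolding pderiv_var_def by simp
qed

lemma lookup_foldr: "distinct is \<Longrightarrow> Poly_Mapping.lookup (foldr pderiv_var is f) e =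
  (\<Prod>j\<in>set is. of_nat (Poly_Mapping.lookup e j + 1)) * Poly_Mapping.lookup f (e + ind (set is))"
proof (induction "is" arbitrary: e)
  case Nil
  then show ?case by (simp add: ind_def)
next
  case (Cons i "is")
  have ni: "i \<notin> set is" using Cons by simp
  have "Poly_Mapping.lookup (foldr pderiv_var (i # is) f) e
     = of_nat (Poly_Mapping.lookup e i + 1) * Poly_Mapping.lookup (foldr pderiv_var is f) (e + Poly_Mapping.single i 1)"
    by (simp add: lookup_pderiv)
  also have "\<dots> = of_nat (Poly_Mapping.lookup e i + 1) * ((\<Prod>j\<in>set is. of_nat (Poly_Mapping.lookup (e + Poly_Mapping.single i 1) j + 1))
       * Poly_Mapping.lookup f (e + Poly_Mapping.single i 1 + ind (set is)))"
    using Cons by simp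
  also have "(\<Prod>j\<in>set is. of_nat (Poly_Mapping.lookup (e + Poly_Mapping.single i 1) j + 1))
       = (\<Prod>j\<in>set is. (of_nat (Poly_Mapping.lookup e j + 1)::real))"
    using ni by (intro prod.cong) (auto simp: lookup_add lookup_single when_def)
  also have "e + Poly_Mapping.single i 1 + ind (set is) = e + ind (set (i # is))"
    using ni by (simp add: ind_def add.assoc)
  finally show ?case using ni by (simp add: mult.assoc)
qed


definition pS :: "nat \<Rightarrow> nat \<Rightarrow> nat set \<Rightarrow> rpoly" where
  "pS n d S = foldr pderiv_var (sorted_list_of_set S) (Sym d n)"

lemma lookup_pS:
  assumes S: "finite S" "S \<subseteq> {..<n}" "card S \<le> d"
  shows "Poly_Mapping.lookup (pS n d S) e =
    (if \<exists>J. J \<subseteq> {..<n} \<and> card J = d - card S \<and> J \<inter> S = {} \<and> e = ind J then 1 else 0)"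
proof -
  have L: "Poly_Mapping.lookup (pS n d S) e = (\<Prod>j\<in>S. of_nat (Poly_Mapping.lookup e j + 1)) * Poly_Mapping.lookup (Sym d n) (e + ind S)"
    unfolding pS_def using lookup_foldr[of "sorted_list_of_set S"] S by simp
  show ?thesis
  proof (cases "\<exists>J. J \<subseteq> {..<n} \<and> card J = d - card S \<and> J \<inter> S = {} \<and> e = ind J")
    case True
    then obtain J where J: "J \<subseteq> {..<n}" "card J = d - card S" "J \<inter> S = {}" "e = ind J" by blast
    have fJ: "finite J" using J finite_subset by blast
    have "(\<Prod>j\<in>S. of_nat (Poly_Mapping.lookup e j + 1)) = (\<Prod>j\<in>S. (1::real))"
      using J fJ by (intro prod.cong) (auto simp: lookup_ind)
    moreover have "e + ind S = ind (J \<union> S)" using J fJ S by (simp add: ind_union)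
    moreover have "card (J \<union> S) = d" using J fJ S by (simp add: card_Un_disjoint)
    ultimately show ?thesis using L True J S by (auto simp: lookup_Sym)
  next
    case False
    have "\<not> (\<exists>I. I \<subseteq> {..<n} \<and> card I = d \<and> e + ind S = ind I)"
    proof
      assume "\<exists>I. I \<subseteq> {..<n} \<and> card I = d \<and> e + ind S = ind I"
      then obtain I where I: "I \<subseteq> {..<n}" "card I = d" "e + ind S = ind I" by blast
      have fI: "finite I" using I finite_subset by blast
      have pt: "Poly_Mapping.lookup e j + (if j \<in> S then 1 else 0) = (if j \<in> I then 1 else 0)" for j
        using arg_cong[OF I(3), of "\<lambda>p. Poly_Mapping.lookup p j"] by (simp add: lookup_add lookup_ind S fI)
      have SI: "S \<subseteq> I"
      proof
        fix j assume "j \<in> S" then show "j \<in> I" using pt[of j] by (auto split: if_splits)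
      qed
      have "e = ind (I - S)"
      proof (rule poly_mapping_eqI)
        fix j show "Poly_Mapping.lookup e j = Poly_Mapping.lookup (ind (I - S)) j"
          using pt[of j] fI by (auto simp: lookup_ind split: if_splits)
      qed
      moreover have "card (I - S) = d - card S" using SI S I fI by (simp add: card_Diff_subset)
      ultimately show False using False I by blast
    qed
    then have "Poly_Mapping.lookup (Sym d n) (e + ind S) = 0" by (simp only: lookup_Sym if_False)
    then show ?thesis using L False by simp
  qed
qed

lemma lookup_pS_ind:
  assumes S: "finite S" "S \<subseteq> {..<n}" "card S \<le> d" and J: "finite J"
  shows "Poly_Mapping.lookup (pS n d S) (ind J) =
    (if J \<subseteq> {..<n} \<and> card J = d - card S \<and> J \<inter> S = {} then 1 else 0)"
proof -
  have "(\<exists>J'. J' \<subseteq> {..<n} \<and> card J' = d - card S \<and> J' \<inter> S = {} \<and> ind J = ind J') \<longleftrightarrow>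
        (J \<subseteq> {..<n} \<and> card J = d - card S \<and> J \<inter> S = {})"
    using ind_inj[OF J] finite_subset by (metis finite_lessThan)
  then show ?thesis by (simp add: lookup_pS[OF S])
qed

lemma lookup_pS_notind:
  assumes S: "finite S" "S \<subseteq> {..<n}" "card S \<le> d"
    and e: "\<not> (\<exists>J. J \<subseteq> {..<n} \<and> card J = d - card S \<and> e = ind J)"
  shows "Poly_Mapping.lookup (pS n d S) e = 0"
  using e by (auto simp: lookup_pS[OF S])

lemma pS_in:
  assumes "S \<subseteq> {..<n}" "card S = k" "f = Sym d n"
  shows "pS n d S \<in> {foldr pderiv_var is f | is. length is = k \<and> set is \<subseteq> {..<n}}"
proof -
  have "finite S" using assms finite_subset by blast
  then show ?thesis using assms unfolding pS_def
    by (intro CollectI exI[of _ "sorted_list_of_set S"]) auto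
qed

lemma count_lemma:
  assumes "finite U" "T \<subseteq> U" "i \<le> p"
  shows "card {X. X \<subseteq> U - Y \<and> card X = p \<and> card (X \<inter> T) = i}
       = (card (T - Y) choose i) * (card (U - (Y \<union> T)) choose (p - i))"
proof -
  let ?A = "{A. A \<subseteq> T - Y \<and> card A = i}"
  let ?B = "{B. B \<subseteq> U - (Y \<union> T) \<and> card B = p - i}"
  have fT: "finite T" using assms finite_subset by blast
  have eq: "{X. X \<subseteq> U - Y \<and> card X = p \<and> card (X \<inter> T) = i} = (\<lambda>(A,B). A \<union> B) ` (?A \<times> ?B)"
  proof (rule set_eqI, rule iffI)
    fix X assume X: "X \<in> {X. X \<subseteq> U - Y \<and> card X = p \<and> card (X \<inter> T) = i}"
    have fX: "finite X" using X assms(1) finite_subset by blast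
    have "card X = card (X \<inter> T) + card (X - T)" by (rule card_Int_Diff[OF fX])
    then have "card (X - T) = p - i" using X by auto
    then have "(X \<inter> T, X - T) \<in> ?A \<times> ?B" using X by auto
    moreover have "X = (\<lambda>(A,B). A \<union> B) (X \<inter> T, X - T)" by auto
    ultimately show "X \<in> (\<lambda>(A,B). A \<union> B) ` (?A \<times> ?B)" by blast
  next
    fix X assume "X \<in> (\<lambda>(A,B). A \<union> B) ` (?A \<times> ?B)"
    then obtain A B where AB: "A \<in> ?A" "B \<in> ?B" "X = A \<union> B" by auto
    have fA: "finite A" using AB fT finite_subset by blast
    have fB: "finite B" using AB assms(1) finite_subset by blast
    have dis: "A \<inter> B = {}" using AB by auto
    have "card X = p" using AB card_Un_disjoint[OF fA fB dis] assms(3) by auto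
    moreover have "X \<inter> T = A" using AB by auto
    ultimately show "X \<in> {X. X \<subseteq> U - Y \<and> card X = p \<and> card (X \<inter> T) = i}"
      using AB assms by auto
  qed
  have inj: "inj_on (\<lambda>(A,B). A \<union> B) (?A \<times> ?B)"
  proof (rule inj_onI, clarify)
    fix A B A' B' assume "A \<subseteq> T - Y" "B \<subseteq> U - (Y \<union> T)" "A' \<subseteq> T - Y" "B' \<subseteq> U - (Y \<union> T)"
      "A \<union> B = A' \<union> B'"
    then have "A = (A \<union> B) \<inter> T" "A' = (A' \<union> B') \<inter> T" "B = (A \<union> B) - T" "B' = (A' \<union> B') - T" by auto
    then show "A = A' \<and> B = B'" using \<open>A \<union> B = A' \<union> B'\<close> by metis
  qed
  have "card ((\<lambda>(A,B). A \<union> B) ` (?A \<times> ?B)) = card ?A * card ?B"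
    by (simp add: card_image[OF inj] card_cartesian_product)
  also have "\<dots> = (card (T - Y) choose i) * (card (U - (Y \<union> T)) choose (p - i))"
    using n_subsets fT assms(1) by (simp add: n_subsets)
  finally show ?thesis using eq by simp
qed


lemma card_diff_sym:
  assumes "finite A" "finite B" "card A = card B"
  shows "card (A - B) = card (B - A)"
proof -
  have "card A = card (A \<inter> B) + card (A - B)" by (rule card_Int_Diff[OF assms(1)])
  moreover have "card B = card (B \<inter> A) + card (B - A)" by (rule card_Int_Diff[OF assms(2)])
  ultimately show ?thesis using assms(3) by (simp add: Int_commute)
qed

lemma card_compl_union:
  assumes "A \<subseteq> {..<n}" "B \<subseteq> {..<n}" "card A = a"
  shows "card ({..<n} - (A \<union> B)) = n - (a + card (B - A))"
proof -
  have fA: "finite A" using assms finite_subset by blast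
  have fB: "finite B" using assms finite_subset by blast
  have "card (A \<union> B) = a + card (B - A)"
    using fA fB assms by (metis Un_Diff_cancel card_Un_disjoint Diff_disjoint finite_Diff)
  then show ?thesis using assms by (simp add: card_Diff_subset fA fB)
qed

locale spanning =
  fixes n k d :: nat
  assumes kd: "k \<le> d" and ak: "d - k \<le> k" and dn: "d \<le> n"
begin

abbreviation "a \<equiv> d - k"

definition "DD = {foldr pderiv_var is (Sym d n) | is. length is = k \<and> set is \<subseteq> {..<n}}"

definition R :: "nat set \<Rightarrow> nat \<Rightarrow> rpoly" where
  "R B j = (\<Sum>J\<in>{J. J \<subseteq> {..<n} \<and> card J = a \<and> card (J - B) = j}. mono_set J)"

definition Y :: "nat set \<Rightarrow> nat \<Rightarrow> rpoly" where
  "Y B i = (\<Sum>S\<in>{S. S \<subseteq> {..<n} \<and> card S = k \<and> card (S \<inter> B) = i}. pS n d S)"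

definition c :: "nat \<Rightarrow> nat \<Rightarrow> real" where
  "c i j = real ((j choose i) * ((n - a - j) choose (k - i)))"

lemma finJ: "finite {J. J \<subseteq> {..<n} \<and> P J}"
  by (rule finite_subset[of _ "Pow {..<n}"]) auto

lemma lookup_R_ind:
  assumes "J0 \<subseteq> {..<n}" "card J0 = a"
  shows "Poly_Mapping.lookup (R B j) (ind J0) = (if card (J0 - B) = j then 1 else 0)"
proof -
  have fJ0: "finite J0" using assms finite_subset by blast
  have "Poly_Mapping.lookup (R B j) (ind J0) = (\<Sum>J\<in>{J. J \<subseteq> {..<n} \<and> card J = a \<and> card (J - B) = j}. if J = J0 then 1 else 0)"
    unfolding R_def lookup_sum lookup_mono_set
  proof (rule sum.cong[OF refl])
    fix J assume "J \<in> {J. J \<subseteq> {..<n} \<and> card J = a \<and> card (J - B) = j}"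
    then have "finite J" using finite_subset by blast
    then show "(if ind J0 = ind J then 1 else 0) = (if J = J0 then 1 else (0::real))"
      using ind_inj fJ0 by auto
  qed
  also have "\<dots> = (if card (J0 - B) = j then 1 else 0)"
    using assms by (simp add: finJ)
  finally show ?thesis .
qed

lemma lookup_R_notind:
  assumes "\<not> (\<exists>J. J \<subseteq> {..<n} \<and> card J = a \<and> e = ind J)"
  shows "Poly_Mapping.lookup (R B j) e = 0"
  unfolding R_def lookup_sum lookup_mono_set using assms by (intro sum.neutral) auto

lemma lookup_Y_notind:
  assumes "\<not> (\<exists>J. J \<subseteq> {..<n} \<and> card J = a \<and> e = ind J)"
  shows "Poly_Mapping.lookup (Y B i) e = 0"
  unfolding Y_def lookup_sum
proof (intro sum.neutral ballI)
  fix S assume S: "S \<in> {S. S \<subseteq> {..<n} \<and> card S = k \<and> card (S \<inter> B) = i}"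
  then have "finite S" using finite_subset by blast
  then show "Poly_Mapping.lookup (pS n d S) e = 0"
    using S assms kd by (intro lookup_pS_notind) auto
qed

lemma lookup_Y_ind:
  assumes J0: "J0 \<subseteq> {..<n}" "card J0 = a" and B: "B \<subseteq> {..<n}" "card B = a" and i: "i \<le> a"
  shows "Poly_Mapping.lookup (Y B i) (ind J0) = c i (card (J0 - B))"
proof -
  have fJ0: "finite J0" using assms finite_subset by blast
  have fB: "finite B" using assms finite_subset by blast
  let ?SS = "{S. S \<subseteq> {..<n} \<and> card S = k \<and> card (S \<inter> B) = i}"
  have "Poly_Mapping.lookup (Y B i) (ind J0) = (\<Sum>S\<in>?SS. if S \<in> {X. X \<subseteq> {..<n} - J0 \<and> card X = k \<and> card (X \<inter> B) = i} then 1 else 0)"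
    unfolding Y_def lookup_sum
  proof (rule sum.cong[OF refl])
    fix S assume S: "S \<in> ?SS"
    then have "finite S" using finite_subset by blast
    then show "Poly_Mapping.lookup (pS n d S) (ind J0) = (if S \<in> {X. X \<subseteq> {..<n} - J0 \<and> card X = k \<and> card (X \<inter> B) = i} then 1 else 0)"
      using S J0 kd fJ0 by (subst lookup_pS_ind) auto
  qed
  also have "\<dots> = real (card {X. X \<subseteq> {..<n} - J0 \<and> card X = k \<and> card (X \<inter> B) = i})"
    by (subst sum.If_cases) (auto simp: finJ intro!: arg_cong[where f=card])
  also have "card {X. X \<subseteq> {..<n} - J0 \<and> card X = k \<and> card (X \<inter> B) = i}
     = (card (B - J0) choose i) * (card ({..<n} - (J0 \<union> B)) choose (k - i))"
    using B i ak by (intro count_lemma) auto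
  also have "card (B - J0) = card (J0 - B)" using fB fJ0 J0 B by (intro card_diff_sym) auto
  also have "card ({..<n} - (J0 \<union> B)) = n - (a + card (B - J0))"
    by (rule card_compl_union[OF J0(1) B(1) J0(2)])
  also have "card (B - J0) = card (J0 - B)" using fB fJ0 J0 B by (intro card_diff_sym) auto
  finally show ?thesis unfolding c_def by (simp add: diff_diff_add)
qed


lemma c_pos: "i \<le> a \<Longrightarrow> c i i > 0"
  unfolding c_def using kd ak dn by simp

lemma c_zero: "j < i \<Longrightarrow> c i j = 0"
  unfolding c_def by simp

lemma R_eq:
  assumes B: "B \<subseteq> {..<n}" "card B = a" and i: "i \<le> a"
  shows "R B i = pscale (1 / c i i) (Y B i - (\<Sum>j\<in>{i<..a}. pscale (c i j) (R B j)))"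
proof (rule poly_mapping_eqI)
  fix e
  show "Poly_Mapping.lookup (R B i) e = Poly_Mapping.lookup (pscale (1 / c i i) (Y B i - (\<Sum>j\<in>{i<..a}. pscale (c i j) (R B j)))) e"
  proof (cases "\<exists>J. J \<subseteq> {..<n} \<and> card J = a \<and> e = ind J")
    case True
    then obtain J0 where J0: "J0 \<subseteq> {..<n}" "card J0 = a" "e = ind J0" by blast
    have fJ0: "finite J0" using J0 finite_subset by blast
    define j0 where "j0 = card (J0 - B)"
    have j0a: "j0 \<le> a" unfolding j0_def using J0 fJ0 by (metis Diff_subset card_mono)
    have sum: "(\<Sum>j\<in>{i<..a}. c i j * (if j0 = j then 1 else 0)) = (if i < j0 then c i j0 else 0)"
      using j0a by (simp add: mult.commute[of _ "if _ then _ else _"] if_distrib cong: if_cong)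
    have cpos: "c i i > 0" using c_pos i by simp
    have L: "Poly_Mapping.lookup (R B i) e = (if j0 = i then 1 else 0)"
      using J0 by (simp add: lookup_R_ind j0_def)
    have Rr: "Poly_Mapping.lookup (pscale (1 / c i i) (Y B i - (\<Sum>j\<in>{i<..a}. pscale (c i j) (R B j)))) e
       = (1 / c i i) * (c i j0 - (\<Sum>j\<in>{i<..a}. c i j * (if j0 = j then 1 else 0)))"
      using J0 B i by (simp add: lookup_minus lookup_sum lookup_R_ind lookup_Y_ind j0_def)
    show ?thesis unfolding L Rr sum using cpos c_zero[of j0 i]
      by (cases "j0 = i"; cases "i < j0") auto
  next
    case False
    then show ?thesis
      by (simp add: lookup_minus lookup_sum lookup_R_notind lookup_Y_notind)
  qed
qed

lemma Y_span: "Y B i \<in> pv.span DD"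
  unfolding Y_def
proof (rule pv.span_sum)
  fix S assume "S \<in> {S. S \<subseteq> {..<n} \<and> card S = k \<and> card (S \<inter> B) = i}"
  then show "pS n d S \<in> pv.span DD" unfolding DD_def by (intro pv.span_base pS_in) auto
qed

lemma R_span:
  assumes B: "B \<subseteq> {..<n}" "card B = a"
  shows "i \<le> a \<Longrightarrow> R B i \<in> pv.span DD"
proof (induction "a - i" arbitrary: i rule: less_induct)
  case less
  have "(\<Sum>j\<in>{i<..a}. pscale (c i j) (R B j)) \<in> pv.span DD"
    using less by (intro pv.span_sum pv.span_scale) (auto intro!: less(1))
  then show ?case
    by (subst R_eq[OF B less(2)]) (intro pv.span_scale pv.span_diff Y_span)
qed

lemma R0: assumes B: "B \<subseteq> {..<n}" "card B = a" shows "R B 0 = mono_set B"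
proof -
  have fB: "finite B" using B finite_subset by blast
  have "{J. J \<subseteq> {..<n} \<and> card J = a \<and> card (J - B) = 0} = {B}"
  proof (rule set_eqI, rule iffI)
    fix J assume J: "J \<in> {J. J \<subseteq> {..<n} \<and> card J = a \<and> card (J - B) = 0}"
    then have "finite J" using finite_subset by blast
    then have "J \<subseteq> B" using J by auto
    then show "J \<in> {B}" using J B fB by (simp add: card_subset_eq)
  qed (use B in auto)
  then show ?thesis unfolding R_def by simp
qed

lemma mono_in_span: "B \<subseteq> {..<n} \<Longrightarrow> card B = a \<Longrightarrow> mono_set B \<in> pv.span DD"
  using R_span[of B 0] R0[of B] by simp

end

lemma lookup_mono_ind: "finite I \<Longrightarrow> finite J \<Longrightarrow> Poly_Mapping.lookup (mono_set I) (ind J) = (if I = J then 1 else 0)"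
  using ind_inj by (auto simp: lookup_mono_set)

lemma mono_indep:
  assumes A: "\<And>I. I \<in> A \<Longrightarrow> finite I" "finite A"
  shows "pv.independent (mono_set ` A)" "card (mono_set ` A) = card A"
proof -
  have inj: "inj_on mono_set A"
  proof (rule inj_onI)
    fix I J assume "I \<in> A" "J \<in> A" "mono_set I = mono_set J"
    then have "Poly_Mapping.lookup (mono_set J) (ind I) = Poly_Mapping.lookup (mono_set I) (ind I)" by simp
    then show "I = J" using lookup_mono_ind[of I I] lookup_mono_ind[of J I] A \<open>I \<in> A\<close> \<open>J \<in> A\<close>
      by (auto split: if_splits)
  qed
  then show "card (mono_set ` A) = card A" by (rule card_image)
  show "pv.independent (mono_set ` A)"
  proof
    assume "pv.dependent (mono_set ` A)"
    then obtain u v where uv: "v \<in> mono_set ` A" "u v \<noteq> 0" "(\<Sum>w\<in>mono_set ` A. pscale (u w) w) = 0"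
      using pv.dependent_finite A by auto
    then obtain I where I: "I \<in> A" "v = mono_set I" by auto
    have "0 = Poly_Mapping.lookup (\<Sum>w\<in>mono_set ` A. pscale (u w) w) (ind I)" using uv by simp
    also have "\<dots> = (\<Sum>w\<in>mono_set ` A. if w = v then u w else 0)"
      unfolding lookup_sum lookup_pscale
    proof (rule sum.cong[OF refl])
      fix w assume "w \<in> mono_set ` A"
      then obtain J where J: "J \<in> A" "w = mono_set J" by auto
      have "w = v \<longleftrightarrow> J = I" using J I inj_onD[OF inj] by auto
      then show "u w * Poly_Mapping.lookup w (ind I) = (if w = v then u w else 0)"
        using J I A lookup_mono_ind[of J I] by auto
    qed
    also have "\<dots> = u v" using uv A by simp
    finally show False using uv by simp
  qed
qed

lemma card_le_dim_span:
  assumes "finite W" "B \<subseteq> pv.span W" "pv.independent B"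
  shows "card B \<le> pv.dim (pv.span W)"
proof -
  obtain A where A: "A \<subseteq> pv.span W" "pv.independent A" "pv.span W \<subseteq> pv.span A" "card A = pv.dim (pv.span W)"
    by (rule pv.basis_exists)
  have fA: "finite A" using pv.independent_span_bound[OF assms(1) A(2) A(1)] by simp
  have "card B \<le> card A"
    using pv.independent_span_bound[OF fA assms(3)] assms(2) A(3) by blast
  then show ?thesis using A(4) by simp
qed

lemma finite_DD: "finite {foldr pderiv_var is f | is. length is = k \<and> set is \<subseteq> {..<(n::nat)}}"
proof -
  have "{foldr pderiv_var is f | is. length is = k \<and> set is \<subseteq> {..<n}} = (\<lambda>is. foldr pderiv_var is f) ` {is. set is \<subseteq> {..<n} \<and> length is = k}"
    by auto
  then show ?thesis using finite_lists_length_eq[of "{..<n}" k] by simp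
qed

context spanning begin

lemma dim_ge: "(n choose a) \<le> pv.dim (pv.span DD)"
proof -
  let ?A = "{B. B \<subseteq> {..<n} \<and> card B = a}"
  have fA: "finite ?A" by (rule finJ)
  have fin: "\<And>I. I \<in> ?A \<Longrightarrow> finite I" using finite_subset by blast
  have "card (mono_set ` ?A) \<le> pv.dim (pv.span DD)"
    using mono_in_span mono_indep(1)[OF fin fA] finite_DD unfolding DD_def by (intro card_le_dim_span) auto
  moreover have "card ?A = n choose a" using n_subsets[of "{..<n}" a] by simp
  ultimately show ?thesis using mono_indep(2)[OF fin fA] by simp
qed

end


locale indep =
  fixes n k d :: nat
  assumes kd: "k \<le> d" and ka: "k \<le> d - k" and dn: "d \<le> n"
begin

abbreviation "a \<equiv> d - k"

definition "KK = {S. S \<subseteq> {..<n} \<and> card S = k}"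

definition g :: "nat \<Rightarrow> nat \<Rightarrow> real" where
  "g i j = real ((j choose i) * ((n - k - j) choose (a - i)))"

lemma finK: "finite {J. J \<subseteq> {..<n} \<and> P J}"
  by (rule finite_subset[of _ "Pow {..<n}"]) auto

lemma fam_indep:
  assumes w: "(\<Sum>S\<in>KK. pscale (w S) (pS n d S)) = 0" and T: "T \<in> KK"
  shows "w T = 0"
proof -
  have fT: "finite T" using T finite_subset unfolding KK_def by blast
  have E: "(\<Sum>S\<in>KK. w S * (if J \<inter> S = {} then 1 else 0)) = 0"
    if J: "J \<subseteq> {..<n}" "card J = a" for J
  proof -
    have fJ: "finite J" using J finite_subset by blast
    have "0 = Poly_Mapping.lookup (\<Sum>S\<in>KK. pscale (w S) (pS n d S)) (ind J)" using w by simp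
    also have "\<dots> = (\<Sum>S\<in>KK. w S * (if J \<inter> S = {} then 1 else 0))"
      unfolding lookup_sum lookup_pscale
    proof (rule sum.cong[OF refl])
      fix S assume S: "S \<in> KK"
      then have "finite S" using finite_subset unfolding KK_def by blast
      then show "w S * Poly_Mapping.lookup (pS n d S) (ind J) = w S * (if J \<inter> S = {} then 1 else 0)"
        using S J fJ kd unfolding KK_def by (subst lookup_pS_ind) auto
    qed
    finally show ?thesis by simp
  qed
  define Q where "Q j = (\<Sum>S\<in>{S\<in>KK. card (T - S) = j}. w S)" for j
  have G: "(\<Sum>j\<in>{..k}. g i j * Q j) = 0" if i: "i \<le> k" for i
  proof -
    let ?AJ = "{J. J \<subseteq> {..<n} \<and> card J = a \<and> card (J \<inter> T) = i}"
    have "0 = (\<Sum>J\<in>?AJ. \<Sum>S\<in>KK. w S * (if J \<inter> S = {} then 1 else 0))"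
      using E by simp
    also have "\<dots> = (\<Sum>S\<in>KK. \<Sum>J\<in>?AJ. w S * (if J \<inter> S = {} then 1 else 0))"
      by (rule sum.swap)
    also have "\<dots> = (\<Sum>S\<in>KK. w S * g i (card (T - S)))"
    proof (rule sum.cong[OF refl])
      fix S assume S: "S \<in> KK"
      have "(\<Sum>J\<in>?AJ. w S * (if J \<inter> S = {} then 1 else 0)) = w S * real (card {J\<in>?AJ. J \<inter> S = {}})"
        by (simp add: sum_distrib_left[symmetric] sum.If_cases finK Int_def conj_assoc)
      also have "{J\<in>?AJ. J \<inter> S = {}} = {X. X \<subseteq> {..<n} - S \<and> card X = a \<and> card (X \<inter> T) = i}"
        by auto
      also have "card \<dots> = (card (T - S) choose i) * (card ({..<n} - (S \<union> T)) choose (a - i))"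
        using T i ka unfolding KK_def by (intro count_lemma) auto
      also have "card ({..<n} - (S \<union> T)) = n - (k + card (T - S))"
        using S T unfolding KK_def by (intro card_compl_union) auto
      finally show "(\<Sum>J\<in>?AJ. w S * (if J \<inter> S = {} then 1 else 0)) = w S * g i (card (T - S))"
        unfolding g_def by (simp add: diff_diff_add)
    qed
    also have "\<dots> = (\<Sum>j\<in>{..k}. \<Sum>S\<in>{S\<in>KK. card (T - S) = j}. w S * g i (card (T - S)))"
    proof (rule sum.group[symmetric])
      show "finite KK" unfolding KK_def by (rule finK)
      show "(\<lambda>S. card (T - S)) ` KK \<subseteq> {..k}"
        using T fT unfolding KK_def by (auto intro: order_trans[OF card_mono[OF fT]])
    qed simp
    also have "\<dots> = (\<Sum>j\<in>{..k}. g i j * Q j)"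
      unfolding Q_def by (intro sum.cong refl) (auto simp: sum_distrib_left mult.commute)
    finally show ?thesis by simp
  qed
  have gpos: "g i i > 0" if "i \<le> k" for i
    unfolding g_def using that ka kd dn by simp
  have gz: "g i j = 0" if "j < i" for i j
    unfolding g_def using that by simp
  have Qz: "i \<le> k \<Longrightarrow> Q i = 0" for i
  proof (induction "k - i" arbitrary: i rule: less_induct)
    case less
    have "(\<Sum>j\<in>{..k}. g i j * Q j) = (\<Sum>j\<in>{..k}. if j = i then g i i * Q i else 0)"
    proof (rule sum.cong[OF refl])
      fix j assume j: "j \<in> {..k}"
      show "g i j * Q j = (if j = i then g i i * Q i else 0)"
      proof (cases "j < i")
        case True then show ?thesis using gz by simp
      next
        case False
        then show ?thesis using less j by (cases "j = i") auto
      qed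
    qed
    also have "\<dots> = g i i * Q i" using less by simp
    finally have "g i i * Q i = 0" using G[OF less(2)] by simp
    then show ?case using gpos[OF less(2)] by simp
  qed
  have "{S\<in>KK. card (T - S) = 0} = {T}"
  proof (rule set_eqI, rule iffI)
    fix S assume S: "S \<in> {S\<in>KK. card (T - S) = 0}"
    then have fS: "finite S" using finite_subset unfolding KK_def by blast
    have "T \<subseteq> S" using S fT by auto
    then have "T = S" using S T fS unfolding KK_def by (intro card_subset_eq) auto
    then show "S \<in> {T}" by simp
  qed (use T in auto)
  then have "Q 0 = w T" unfolding Q_def by simp
  then show ?thesis using Qz[of 0] by simp
qed

lemma pS_inj: "inj_on (pS n d) KK"
proof (rule inj_onI, rule ccontr)
  fix S S' assume S: "S \<in> KK" "S' \<in> KK" "pS n d S = pS n d S'" "S \<noteq> S'"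
  define w where "w X = (if X = S then 1 else if X = S' then -1 else (0::real))" for X
  have "(\<Sum>X\<in>KK. pscale (w X) (pS n d X)) = 0"
  proof (rule poly_mapping_eqI)
    fix e
    have "(\<Sum>X\<in>KK. w X * Poly_Mapping.lookup (pS n d X) e)
        = (\<Sum>X\<in>KK. (if X = S then Poly_Mapping.lookup (pS n d S) e else 0) + (if X = S' then - Poly_Mapping.lookup (pS n d S') e else 0))"
      unfolding w_def using S(4) by (intro sum.cong) auto
    also have "\<dots> = 0" using S by (simp add: sum.distrib KK_def finK)
    finally show "Poly_Mapping.lookup (\<Sum>X\<in>KK. pscale (w X) (pS n d X)) e = Poly_Mapping.lookup 0 e"
      by (simp add: lookup_sum)
  qed
  then have "w S = 0" using fam_indep S by blast
  then show False unfolding w_def by simp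
qed

lemma dim_ge: "(n choose k) \<le> pv.dim (pv.span {foldr pderiv_var is (Sym d n) | is. length is = k \<and> set is \<subseteq> {..<n}})"
proof -
  let ?P = "pS n d ` KK"
  have fKK: "finite KK" unfolding KK_def by (rule finK)
  have ind: "pv.independent ?P"
  proof
    assume "pv.dependent ?P"
    then obtain u v where uv: "v \<in> ?P" "u v \<noteq> 0" "(\<Sum>x\<in>?P. pscale (u x) x) = 0"
      using pv.dependent_finite fKK by auto
    then obtain T where T: "T \<in> KK" "v = pS n d T" by auto
    have "(\<Sum>S\<in>KK. pscale (u (pS n d S)) (pS n d S)) = 0"
      using uv(3) by (simp add: sum.reindex[OF pS_inj])
    then have "u (pS n d T) = 0" by (rule fam_indep[OF _ T(1)])
    then show False using uv T by simp
  qed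
  have sub: "?P \<subseteq> pv.span {foldr pderiv_var is (Sym d n) | is. length is = k \<and> set is \<subseteq> {..<n}}"
    using pS_in unfolding KK_def by (intro subsetI pv.span_base) auto
  have "card ?P \<le> pv.dim (pv.span {foldr pderiv_var is (Sym d n) | is. length is = k \<and> set is \<subseteq> {..<n}})"
    by (rule card_le_dim_span[OF finite_DD sub ind])
  moreover have "card ?P = n choose k"
    using card_image[OF pS_inj] n_subsets[of "{..<n}" k] unfolding KK_def by simp
  ultimately show ?thesis by simp
qed

end



lemma finSS: "finite (subsets_of_size n s)"
  unfolding subsets_of_size_def by (rule finite_subset[of _ "Pow {..<n}"]) auto

lemma card_SS: "card (subsets_of_size n s) = n choose s"
  unfolding subsets_of_size_def using n_subsets[of "{..<n}" s] by simp

lemma Mdisj_sym: "Mdisj I J = Mdisj J I"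
  unfolding Mdisj_def by (simp add: Int_commute)

lemma count_disj:
  assumes "Z \<subseteq> {..<n}"
  shows "card {Y \<in> subsets_of_size n q. Y \<inter> Z = {}} = (n - card Z) choose q"
proof -
  have fZ: "finite Z" using assms finite_subset by blast
  have "{Y \<in> subsets_of_size n q. Y \<inter> Z = {}} = {Y. Y \<subseteq> {..<n} - Z \<and> card Y = q}"
    unfolding subsets_of_size_def by auto
  then show ?thesis using n_subsets[of "{..<n} - Z" q] assms fZ by (simp add: card_Diff_subset)
qed

lemma sum_M2:
  assumes "X \<subseteq> {..<n}" "X' \<subseteq> {..<n}"
  shows "(\<Sum>Y\<in>subsets_of_size n q. Mdisj Y X * Mdisj Y X') = real ((n - card (X \<union> X')) choose q)"
proof -
  have "(\<Sum>Y\<in>subsets_of_size n q. Mdisj Y X * Mdisj Y X') =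
        (\<Sum>Y\<in>subsets_of_size n q. if Y \<inter> (X \<union> X') = {} then 1 else 0)"
    unfolding Mdisj_def by (intro sum.cong) auto
  also have "\<dots> = real (card {Y \<in> subsets_of_size n q. Y \<inter> (X \<union> X') = {}})"
    by (simp add: sum.If_cases finSS Int_def)
  finally show ?thesis using count_disj[of "X \<union> X'" n q] assms by simp
qed

lemma sum_M1:
  assumes "X \<subseteq> {..<n}" "card X = p"
  shows "(\<Sum>Y\<in>subsets_of_size n q. Mdisj Y X) = real ((n - p) choose q)"
  using sum_M2[OF assms(1) assms(1), of q] assms unfolding Mdisj_def
  by (simp add: if_distrib cong: if_cong)

definition FF :: "nat \<Rightarrow> nat \<Rightarrow> nat \<Rightarrow> real" where
  "FF n p q = (\<Sum>X\<in>subsets_of_size n p. \<Sum>X'\<in>subsets_of_size n p.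
      (\<Sum>Y\<in>subsets_of_size n q. Mdisj Y X * Mdisj Y X') ^ 2)"

lemma FF_ge:
  assumes p: "1 \<le> p" "p + q \<le> n"
  shows "FF n p q \<ge> real (n choose p) * (real ((n - p) choose q) ^ 2 + real (p * (n - p)) * real ((n - p - 1) choose q) ^ 2)"
proof -
  let ?L = "real ((n - p) choose q) ^ 2 + real (p * (n - p)) * real ((n - p - 1) choose q) ^ 2"
  have inner: "(\<Sum>X'\<in>subsets_of_size n p. (\<Sum>Y\<in>subsets_of_size n q. Mdisj Y X * Mdisj Y X') ^ 2) \<ge> ?L"
    if X: "X \<in> subsets_of_size n p" for X
  proof -
    have XX: "X \<subseteq> {..<n}" "card X = p" using X unfolding subsets_of_size_def by auto
    have fX: "finite X" using XX finite_subset by blast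
    let ?N = "{X'. X' \<subseteq> {..<n} - {} \<and> card X' = p \<and> card (X' \<inter> X) = p - 1}"
    have pc: "p choose (p - 1) = p" using p binomial_symmetric[of "p - 1" p] by simp
    have cardN: "card ?N = p * (n - p)"
      using pc count_lemma[of "{..<n}" X "p - 1" p "{}"] XX p fX by (simp add: card_Diff_subset)
    have XnN: "X \<notin> ?N" using XX p by auto
    have sub: "insert X ?N \<subseteq> subsets_of_size n p" using XX unfolding subsets_of_size_def by auto
    have fN: "finite ?N" by (rule finite_subset[OF _ finSS[of n p]]) (use sub in auto)
    let ?f = "\<lambda>X'. (\<Sum>Y\<in>subsets_of_size n q. Mdisj Y X * Mdisj Y X') ^ 2"
    have "?f X = real ((n - p) choose q) ^ 2" using sum_M2[OF XX(1) XX(1), of q] XX by simp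
    moreover have "?f X' = real ((n - p - 1) choose q) ^ 2" if X': "X' \<in> ?N" for X'
    proof -
      have fX': "finite X'" using X' finite_subset by blast
      have "card X' = card (X' \<inter> X) + card (X' - X)" by (rule card_Int_Diff[OF fX'])
      then have "card (X' - X) = 1" using X' p by auto
      have "card (X \<union> X') = card X + card (X' - X)"
        using fX fX' by (metis Un_Diff_cancel card_Un_disjoint Diff_disjoint finite_Diff)
      then have "card (X \<union> X') = p + 1" using \<open>card (X' - X) = 1\<close> XX by simp
      then show ?thesis using sum_M2[OF XX(1), of X' q] X' by (simp add: diff_diff_add)
    qed
    ultimately have eqL: "(\<Sum>X'\<in>insert X ?N. ?f X') = ?L"
      using fN XnN cardN by simp
    have "(\<Sum>X'\<in>insert X ?N. ?f X') \<le> (\<Sum>X'\<in>subsets_of_size n p. ?f X')"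
      by (rule sum_mono2[OF finSS sub]) simp
    then show ?thesis using eqL by simp
  qed
  have "(\<Sum>X\<in>subsets_of_size n p. ?L) \<le> FF n p q"
    unfolding FF_def by (rule sum_mono) (rule inner)
  then show ?thesis by (simp add: card_SS)
qed

lemma swap4:
  fixes M :: "'b \<Rightarrow> 'a \<Rightarrow> real"
  shows "(\<Sum>J\<in>A. \<Sum>J'\<in>A. (\<Sum>I\<in>B. M I J * M I J') ^ 2)
       = (\<Sum>I\<in>B. \<Sum>I'\<in>B. (\<Sum>J\<in>A. M I J * M I' J) ^ 2)"
proof -
  let ?P = "\<lambda>I I' J J'. M I J * M I J' * (M I' J * M I' J')"
  have "(\<Sum>J\<in>A. \<Sum>J'\<in>A. (\<Sum>I\<in>B. M I J * M I J') ^ 2) = (\<Sum>J\<in>A. \<Sum>J'\<in>A. \<Sum>I\<in>B. \<Sum>I'\<in>B. ?P I I' J J')"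
    by (simp add: power2_eq_square sum_product)
  also have "\<dots> = (\<Sum>J\<in>A. \<Sum>I\<in>B. \<Sum>J'\<in>A. \<Sum>I'\<in>B. ?P I I' J J')"
    by (intro sum.cong refl sum.swap)
  also have "\<dots> = (\<Sum>J\<in>A. \<Sum>I\<in>B. \<Sum>I'\<in>B. \<Sum>J'\<in>A. ?P I I' J J')"
    by (intro sum.cong refl sum.swap)
  also have "\<dots> = (\<Sum>I\<in>B. \<Sum>J\<in>A. \<Sum>I'\<in>B. \<Sum>J'\<in>A. ?P I I' J J')"
    by (rule sum.swap)
  also have "\<dots> = (\<Sum>I\<in>B. \<Sum>I'\<in>B. \<Sum>J\<in>A. \<Sum>J'\<in>A. ?P I I' J J')"
    by (intro sum.cong refl sum.swap)
  also have "\<dots> = (\<Sum>I\<in>B. \<Sum>I'\<in>B. (\<Sum>J\<in>A. M I J * M I' J) ^ 2)"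
    by (simp add: power2_eq_square sum_product mult_ac)
  finally show ?thesis .
qed

lemma trB2_FF1: "trB2 n k d = FF n (d - k) k"
  unfolding trB2_def FF_def Bmat_def
  by (intro sum.cong refl) (simp add: power2_eq_square mult.commute)

lemma trB2_FF2: "trB2 n k d = FF n k (d - k)"
proof -
  have "trB2 n k d = (\<Sum>J\<in>subsets_of_size n (d - k). \<Sum>J'\<in>subsets_of_size n (d - k).
      (\<Sum>I\<in>subsets_of_size n k. Mdisj I J * Mdisj I J') ^ 2)"
    unfolding trB2_def Bmat_def
    by (intro sum.cong refl) (simp add: power2_eq_square mult.commute)
  also have "\<dots> = (\<Sum>I\<in>subsets_of_size n k. \<Sum>I'\<in>subsets_of_size n k.
      (\<Sum>J\<in>subsets_of_size n (d - k). Mdisj I J * Mdisj I' J) ^ 2)"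
    by (rule swap4)
  also have "\<dots> = FF n k (d - k)"
    unfolding FF_def by (intro sum.cong refl) (simp add: Mdisj_sym)
  finally show ?thesis .
qed

lemma trB_1: "trB n k d = real (n choose (d - k)) * real ((n - (d - k)) choose k)"
proof -
  have "trB n k d = (\<Sum>J\<in>subsets_of_size n (d - k). real ((n - (d - k)) choose k))"
    unfolding trB_def Bmat_def
  proof (intro sum.cong refl)
    fix J assume "J \<in> subsets_of_size n (d - k)"
    then have J: "J \<subseteq> {..<n}" "card J = d - k" unfolding subsets_of_size_def by auto
    have "(\<Sum>I\<in>subsets_of_size n k. Mdisj I J * Mdisj I J) = (\<Sum>I\<in>subsets_of_size n k. Mdisj I J)"
      unfolding Mdisj_def by (intro sum.cong) auto
    then show "(\<Sum>I\<in>subsets_of_size n k. Mdisj I J * Mdisj I J) = real ((n - (d - k)) choose k)"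
      using sum_M1[OF J] by simp
  qed
  then show ?thesis by (simp add: card_SS)
qed

lemma trB_2: "trB n k d = real (n choose k) * real ((n - k) choose (d - k))"
proof -
  have "trB n k d = (\<Sum>J\<in>subsets_of_size n (d - k). \<Sum>I\<in>subsets_of_size n k. Mdisj J I)"
    unfolding trB_def Bmat_def Mdisj_def by (intro sum.cong refl) (auto simp: Int_commute)
  also have "\<dots> = (\<Sum>I\<in>subsets_of_size n k. \<Sum>J\<in>subsets_of_size n (d - k). Mdisj J I)"
    by (rule sum.swap)
  also have "\<dots> = (\<Sum>I\<in>subsets_of_size n k. real ((n - k) choose (d - k)))"
  proof (intro sum.cong refl)
    fix I assume "I \<in> subsets_of_size n k"
    then have I: "I \<subseteq> {..<n}" "card I = k" unfolding subsets_of_size_def by auto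
    show "(\<Sum>J\<in>subsets_of_size n (d - k). Mdisj J I) = real ((n - k) choose (d - k))"
      using sum_M1[OF I] by simp
  qed
  finally show ?thesis by (simp add: card_SS)
qed



lemma real_bound:
  fixes T T2 u cn c0 c1 N P D :: real
  assumes "cn > 0" "c0 > 0" "P > 0" "N > 0" "D > 0" "N * c1 = D * c0" "T = cn * c0"
    "T2 \<ge> cn * (c0 ^ 2 + P * N * c1 ^ 2)" "u \<ge> cn"
  shows "(T ^ 2 / T2) / u \<le> N / (P * D ^ 2)"
proof -
  have c1: "c1 = D * c0 / N" using assms by (simp add: field_simps)
  have c1p: "c1 > 0" unfolding c1 using assms by simp
  have Lp: "cn * (c0 ^ 2 + P * N * c1 ^ 2) > 0" using assms c1p by (intro mult_pos_pos add_pos_pos) auto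
  have up: "u > 0" using assms by simp
  have Xp: "c0 ^ 2 + P * N * c1 ^ 2 > 0" using assms c1p by (intro add_pos_pos) auto
  have "T ^ 2 / T2 \<le> T ^ 2 / (cn * (c0 ^ 2 + P * N * c1 ^ 2))"
    using Lp assms(8) by (intro divide_left_mono) auto
  also have "\<dots> = cn * (c0 ^ 2 / (c0 ^ 2 + P * N * c1 ^ 2))"
  proof -
    have gen: "(cn * c0) ^ 2 / (cn * X) = cn * (c0 ^ 2 / X)" if "X > 0" for X
      using that assms(1) by (simp add: power2_eq_square)
    show ?thesis unfolding assms(7) by (rule gen[OF Xp])
  qed
  finally have "(T ^ 2 / T2) / u \<le> cn * (c0 ^ 2 / (c0 ^ 2 + P * N * c1 ^ 2)) / u"
    using less_imp_le[OF up] by (rule divide_right_mono)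
  also have "\<dots> \<le> cn * (c0 ^ 2 / (c0 ^ 2 + P * N * c1 ^ 2)) / cn"
    using assms Lp by (intro divide_left_mono) auto
  also have "\<dots> = c0 ^ 2 / (c0 ^ 2 + P * N * c1 ^ 2)" using assms by simp
  also have "\<dots> \<le> c0 ^ 2 / (P * N * c1 ^ 2)"
    using assms c1p Xp by (intro divide_left_mono mult_pos_pos) auto
  also have "\<dots> = N / (P * D ^ 2)"
    unfolding c1 using assms by (simp add: power2_eq_square field_simps)
  finally show ?thesis .
qed

lemma main_bound:
  fixes n p q d :: nat and T T2 u :: real
  assumes p1: "1 \<le> p" and pqd: "p + q = d" and dn: "d < n"
    and T: "T = real (n choose p) * real ((n - p) choose q)"
    and T2: "T2 \<ge> real (n choose p) * (real ((n - p) choose q) ^ 2 + real (p * (n - p)) * real ((n - p - 1) choose q) ^ 2)"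
    and u: "u \<ge> real (n choose p)"
  shows "(T ^ 2 / T2) / u \<le> real (n - p) / (real p * real (n - d) ^ 2)"
proof -
  have ab: "(n - p - q) * ((n - p) choose q) = (n - p) * ((n - p - 1) choose q)"
    by (rule binomial_absorb_comp)
  have "n - p - q = n - d" using pqd by simp
  then have ab': "real (n - p) * real ((n - p - 1) choose q) = real (n - d) * real ((n - p) choose q)"
    using ab by (metis of_nat_mult)
  show ?thesis
  proof (rule real_bound[OF _ _ _ _ _ ab' T _ u])
    show "0 < real (n choose p)" using dn pqd by simp
    show "0 < real (n - p choose q)" using dn pqd by simp
    show "0 < real p" using p1 by simp
    show "0 < real (n - p)" using dn pqd by simp
    show "0 < real (n - d)" using dn by simp
    show "real (n choose p) * ((real (n - p choose q)) ^ 2 + real p * real (n - p) * (real (n - p - 1 choose q)) ^ 2) \<le> T2"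
      using T2 by (simp add: mult.assoc)
  qed
qed

theorem proposition2:
  fixes k' d' n' :: nat
  assumes "0 < k'" "k' < d'" "2 * d' < n'"
  shows "(\<lambda>m. (trB (n' * m) (k' * m) (d' * m) ^ 2 / trB2 (n' * m) (k' * m) (d' * m))
              / real (dim_partials (n' * m) (k' * m) (Sym (d' * m) (n' * m))))
         \<longlonglongrightarrow> 0"
proof (rule Lim_null_comparison)
  show "(\<lambda>m. real n' / real m) \<longlonglongrightarrow> 0" by (rule lim_const_over_n)
  show "\<forall>\<^sub>F m in sequentially. norm ((trB (n' * m) (k' * m) (d' * m) ^ 2 / trB2 (n' * m) (k' * m) (d' * m))
              / real (dim_partials (n' * m) (k' * m) (Sym (d' * m) (n' * m)))) \<le> real n' / real m"
  proof (rule eventually_sequentiallyI[of 1])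
    fix m :: nat assume m: "1 \<le> m"
    define n k d where "n = n' * m" and "k = k' * m" and "d = d' * m"
    let ?T = "trB n k d" and ?T2 = "trB2 n k d" and ?u = "real (dim_partials n k (Sym d n))"
    have kd0: "k \<le> d" "k < d" unfolding k_def d_def using assms m by auto
    have dn0: "d < n" unfolding n_def d_def using assms m by auto
    have a_eq: "d - k = (d' - k') * m" unfolding k_def d_def by (simp add: diff_mult_distrib)
    have "?T2 \<ge> 0" unfolding trB2_FF1 FF_def by (intro sum_nonneg) auto
    moreover have "?u \<ge> 0" by simp
    ultimately have nn: "(?T ^ 2 / ?T2) / ?u \<ge> 0" by simp
    obtain p where p: "m \<le> p" "(?T ^ 2 / ?T2) / ?u \<le> real (n - p) / (real p * real (n - d) ^ 2)"
    proof (cases "d - k \<le> k")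
      case True
      interpret spanning n k d using kd0 dn0 True by unfold_locales auto
      have pm: "m \<le> d - k" unfolding a_eq using assms m by simp
      have "(?T ^ 2 / ?T2) / ?u \<le> real (n - (d - k)) / (real (d - k) * real (n - d) ^ 2)"
      proof (rule main_bound)
        show "1 \<le> d - k" using pm m by simp
        show "d - k + k = d" using kd0 by simp
        show "d < n" by (rule dn0)
        show "?T = real (n choose (d - k)) * real (n - (d - k) choose k)" by (rule trB_1)
        show "?T2 \<ge> real (n choose (d - k)) * ((real (n - (d - k) choose k)) ^ 2 + real ((d - k) * (n - (d - k))) * (real (n - (d - k) - 1 choose k)) ^ 2)"
          unfolding trB2_FF1 using pm m kd0 dn0 by (intro FF_ge) auto
        show "?u \<ge> real (n choose (d - k))"
          using dim_ge unfolding dim_partials_def pdim_span_def DD_def by simp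
      qed
      then show ?thesis using that pm by blast
    next
      case False
      interpret indep n k d using kd0 dn0 False by unfold_locales auto
      have pm: "m \<le> k" unfolding k_def using assms m by simp
      have "(?T ^ 2 / ?T2) / ?u \<le> real (n - k) / (real k * real (n - d) ^ 2)"
      proof (rule main_bound)
        show "1 \<le> k" using pm m by simp
        show "k + (d - k) = d" using kd0 by simp
        show "d < n" by (rule dn0)
        show "?T = real (n choose k) * real (n - k choose (d - k))" by (rule trB_2)
        show "?T2 \<ge> real (n choose k) * ((real (n - k choose (d - k))) ^ 2 + real (k * (n - k)) * (real (n - k - 1 choose (d - k))) ^ 2)"
          unfolding trB2_FF2 using pm m kd0 dn0 by (intro FF_ge) auto
        show "?u \<ge> real (n choose k)"
          using dim_ge unfolding dim_partials_def pdim_span_def by simp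
      qed
      then show ?thesis using that pm by blast
    qed
    have "n' - d' \<ge> 1" using assms by simp
    then have nd: "m \<le> n - d" unfolding n_def d_def using assms
      by (metis diff_mult_distrib mult_1 mult_le_mono1)
    have "real (n - p) / (real p * real (n - d) ^ 2) \<le> real n / (real m * real m ^ 2)"
    proof (rule frac_le)
      show "real (n - p) \<le> real n" by simp
      show "0 < real m * real m ^ 2" using m by simp
      show "real m * real m ^ 2 \<le> real p * real (n - d) ^ 2"
        using p(1) nd by (intro mult_mono power_mono) auto
    qed simp
    also have "\<dots> = real n' / real m ^ 2" unfolding n_def using m by (simp add: power2_eq_square)
    also have "\<dots> \<le> real n' / real m" using m by (intro divide_left_mono) (auto simp: power2_eq_square)
    finally show "norm ((trB (n' * m) (k' * m) (d' * m) ^ 2 / trB2 (n' * m) (k' * m) (d' * m))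
              / real (dim_partials (n' * m) (k' * m) (Sym (d' * m) (n' * m)))) \<le> real n' / real m"
      using p(2) nn unfolding n_def k_def d_def by simp
  qed
qed

end
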